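(* Let $\lambda\in\mathfrak h_{\bar 0}^*\setminus\Lambda_{\mathbb Z}$. Then $\mathrm{sch}\,L(\lambda)=0$.
   Context: Let $\mathfrak g=\mathfrak q(n)$ be the queer Lie superalgebra with Cartan subalgebra $\mathfrak h=\mathfrak h_{\bar 0}\oplus\mathfrak h_{\bar 1}$, and $\{\delta_i\}$ the basis of $\mathfrak h_{\bar 0}^*$ dual to the diagonal matrix units. $\Lambda_{\mathbb Z}=\{\sum_i\lambda_i\delta_i\mid\lambda_i\in\mathbb Z\}$ is the set of integer weights. $L(\lambda)$ is the irreducible highest weight module (with respect to the standard Borel subalgebra) of highest weight $\lambda$, and $\mathrm{sch}\,M=\sum_\mu(\dim M_{\mu,\bar 0}-\dim M_{\mu,\bar 1})e^\mu$. *)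

theory Defs
  imports Complex_Main
begin

text \<open>Elements of the queer Lie superalgebra q(n) are block matrices [[A,B],[B,A]];
  the even part consists of the matrices A (acting as [[A,0],[0,A]]), the odd part of the
  matrices B (acting as [[0,B],[B,0]]). n x n complex matrices are indexed by a finite
  linearly ordered type 'n (the linear order fixes the standard Borel subalgebra).\<close>

type_synonym 'n qmat = "'n \<Rightarrow> 'n \<Rightarrow> complex"

definition mmul :: "'n::finite qmat \<Rightarrow> 'n qmat \<Rightarrow> 'n qmat" where
  "mmul A B = (\<lambda>i j. \<Sum>k\<in>UNIV. A i k * B k j)"

definition mcomm :: "'n::finite qmat \<Rightarrow> 'n qmat \<Rightarrow> 'n qmat" where
  "mcomm A B = (\<lambda>i j. mmul A B i j - mmul B A i j)"

definition manti :: "'n::finite qmat \<Rightarrow> 'n qmat \<Rightarrow> 'n qmat" where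
  "manti A B = (\<lambda>i j. mmul A B i j + mmul B A i j)"

definition munit :: "'n \<Rightarrow> 'n \<Rightarrow> 'n qmat" where
  "munit i j = (\<lambda>a b. if a = i \<and> b = j then 1 else 0)"

text \<open>A q(n)-supermodule: a complex vector space (scalar multiplication sc) with a
  Z/2-grading V0 (+) V1, an even-part action r0 and an odd-part action r1, satisfying the
  super bracket relations of q(n):
  [A,A'] = AA'-A'A (even,even), [A,B] = AB-BA (even,odd), [B,B'] = BB'+B'B (odd,odd).\<close>

definition q_supermodule ::
  "(complex \<Rightarrow> 'v::ab_group_add \<Rightarrow> 'v) \<Rightarrow> 'v set \<Rightarrow> 'v set \<Rightarrow>
   ('n::finite qmat \<Rightarrow> 'v \<Rightarrow> 'v) \<Rightarrow> ('n qmat \<Rightarrow> 'v \<Rightarrow> 'v) \<Rightarrow> bool" where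
  "q_supermodule sc V0 V1 r0 r1 \<longleftrightarrow>
     vector_space sc \<and> module.subspace sc V0 \<and> module.subspace sc V1 \<and>
     V0 \<inter> V1 = {0} \<and> (\<forall>v. \<exists>a\<in>V0. \<exists>b\<in>V1. v = a + b) \<and>
     (\<forall>A. Vector_Spaces.linear sc sc (r0 A)) \<and> (\<forall>A. Vector_Spaces.linear sc sc (r1 A)) \<and>
     (\<forall>A B v. r0 (\<lambda>i j. A i j + B i j) v = r0 A v + r0 B v) \<and>
     (\<forall>A B v. r1 (\<lambda>i j. A i j + B i j) v = r1 A v + r1 B v) \<and>
     (\<forall>c A v. r0 (\<lambda>i j. c * A i j) v = sc c (r0 A v)) \<and>
     (\<forall>c A v. r1 (\<lambda>i j. c * A i j) v = sc c (r1 A v)) \<and>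
     (\<forall>A. r0 A ` V0 \<subseteq> V0 \<and> r0 A ` V1 \<subseteq> V1 \<and> r1 A ` V0 \<subseteq> V1 \<and> r1 A ` V1 \<subseteq> V0) \<and>
     (\<forall>A B v. r0 (mcomm A B) v = r0 A (r0 B v) - r0 B (r0 A v)) \<and>
     (\<forall>A B v. r1 (mcomm A B) v = r0 A (r1 B v) - r1 B (r0 A v)) \<and>
     (\<forall>A B v. r0 (manti A B) v = r1 A (r1 B v) + r1 B (r1 A v))"

definition graded_submodule ::
  "(complex \<Rightarrow> 'v::ab_group_add \<Rightarrow> 'v) \<Rightarrow> 'v set \<Rightarrow> 'v set \<Rightarrow>
   ('n::finite qmat \<Rightarrow> 'v \<Rightarrow> 'v) \<Rightarrow> ('n qmat \<Rightarrow> 'v \<Rightarrow> 'v) \<Rightarrow> 'v set \<Rightarrow> bool" where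
  "graded_submodule sc V0 V1 r0 r1 W \<longleftrightarrow>
     module.subspace sc W \<and> (\<forall>w\<in>W. \<exists>a\<in>V0 \<inter> W. \<exists>b\<in>V1 \<inter> W. w = a + b) \<and>
     (\<forall>A. r0 A ` W \<subseteq> W \<and> r1 A ` W \<subseteq> W)"

definition simple_supermodule ::
  "(complex \<Rightarrow> 'v::ab_group_add \<Rightarrow> 'v) \<Rightarrow> 'v set \<Rightarrow> 'v set \<Rightarrow>
   ('n::finite qmat \<Rightarrow> 'v \<Rightarrow> 'v) \<Rightarrow> ('n qmat \<Rightarrow> 'v \<Rightarrow> 'v) \<Rightarrow> bool" where
  "simple_supermodule sc V0 V1 r0 r1 \<longleftrightarrow>
     q_supermodule sc V0 V1 r0 r1 \<and> (\<exists>v::'v. v \<noteq> 0) \<and>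
     (\<forall>W. graded_submodule sc V0 V1 r0 r1 W \<longrightarrow> W = {0} \<or> W = UNIV)"

text \<open>Weight space M_mu for mu in h0^*, mu = sum_i mu i delta_i.\<close>

definition weight_space ::
  "(complex \<Rightarrow> 'v \<Rightarrow> 'v) \<Rightarrow> ('n qmat \<Rightarrow> 'v \<Rightarrow> 'v) \<Rightarrow> ('n \<Rightarrow> complex) \<Rightarrow> 'v set" where
  "weight_space sc r0 mu = {v. \<forall>i. r0 (munit i i) v = sc (mu i) v}"

text \<open>Coefficient of e^mu in the supercharacter: dim M_{mu,0} - dim M_{mu,1}.\<close>

definition sch ::
  "(complex \<Rightarrow> 'v::ab_group_add \<Rightarrow> 'v) \<Rightarrow> 'v set \<Rightarrow> 'v set \<Rightarrow>
   ('n qmat \<Rightarrow> 'v \<Rightarrow> 'v) \<Rightarrow> ('n \<Rightarrow> complex) \<Rightarrow> int" where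
  "sch sc V0 V1 r0 mu =
     int (vector_space.dim sc (weight_space sc r0 mu \<inter> V0))
     - int (vector_space.dim sc (weight_space sc r0 mu \<inter> V1))"

definition highest_weight_vector ::
  "(complex \<Rightarrow> 'v::ab_group_add \<Rightarrow> 'v) \<Rightarrow> 'v set \<Rightarrow> 'v set \<Rightarrow>
   ('n::{finite,linorder} qmat \<Rightarrow> 'v \<Rightarrow> 'v) \<Rightarrow> ('n qmat \<Rightarrow> 'v \<Rightarrow> 'v) \<Rightarrow>
   ('n \<Rightarrow> complex) \<Rightarrow> 'v \<Rightarrow> bool" where
  "highest_weight_vector sc V0 V1 r0 r1 lam v \<longleftrightarrow>
     v \<noteq> 0 \<and> (v \<in> V0 \<or> v \<in> V1) \<and> v \<in> weight_space sc r0 lam \<and>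
     (\<forall>i j. i < j \<longrightarrow> r0 (munit i j) v = 0 \<and> r1 (munit i j) v = 0)"

end

theory Submission
  imports Defs
begin

lemma mcomm_units: "mcomm (munit i i) (munit a b) =
  (\<lambda>x y. ((if i=a then 1 else 0) - (if i=b then 1 else 0)) * munit a b x y)"
  by (auto simp: mcomm_def mmul_def munit_def fun_eq_iff if_distrib[of "\<lambda>z. z * _"] sum.delta cong: if_cong)

lemma manti_units: "manti (munit i i) (munit i i) = (\<lambda>x y. 2 * munit i i x y)"
  by (auto simp: manti_def mmul_def munit_def fun_eq_iff if_distrib[of "\<lambda>z. z * _"] sum.delta cong: if_cong)

lemma mat_decomp: "(A::'n::finite qmat) = (\<lambda>x y. \<Sum>p\<in>UNIV. A (fst p) (snd p) * munit (fst p) (snd p) x y)"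
proof (intro ext)
  fix x y
  have "(\<Sum>p\<in>UNIV. A (fst p) (snd p) * munit (fst p) (snd p) x y) = (\<Sum>p\<in>UNIV. if p = (x,y) then A x y else 0)"
    by (rule sum.cong) (auto simp: munit_def)
  then show "A x y = (\<Sum>p\<in>UNIV. A (fst p) (snd p) * munit (fst p) (snd p) x y)" by simp
qed

lemma vector_space_pair_dim_image_eq:
  assumes vs: "vector_space s1" "vector_space s2" and lf: "Vector_Spaces.linear s1 s2 f"
    and fi: "inj_on f (module.span s1 S)"
  shows "vector_space.dim s2 (f ` S) = vector_space.dim s1 S"
proof -
  interpret vs1: vector_space s1 by fact
  interpret vs2: vector_space s2 by fact
  interpret lf: Vector_Spaces.linear s1 s2 f by fact
  obtain B where B: "B \<subseteq> S" "vs1.independent B" "S \<subseteq> vs1.span B" "card B = vs1.dim S"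
    using vs1.basis_exists[of S] by auto
  then have "vs1.span S = vs1.span B"
    using vs1.span_mono[of B S] vs1.span_mono[of S "vs1.span B"] vs1.span_span[of B] by auto
  moreover have "card (f ` B) = card B"
    using assms card_image[of f B] inj_on_subset[of f "vs1.span S" B] B vs1.span_superset by auto
  moreover have "(f ` B) \<subseteq> (f ` S)"
    using B by auto
  ultimately show ?thesis
    by (metis B(2) B(4) fi lf.dependent_inj_imageD lf.span_image vs2.dim_eq_card_independent vs2.dim_span)
qed

lemma dim_zero_space: assumes "vector_space s" shows "vector_space.dim s {0} = 0"
proof -
  interpret vector_space s by fact
  have "dim {0} = dim (span {})" using span_empty by metis
  also have "\<dots> = 0" using dim_span_eq_card_independent[OF independent_empty] by simp
  finally show ?thesis .
qed


primrec polyop :: "(complex \<Rightarrow> 'v::ab_group_add \<Rightarrow> 'v) \<Rightarrow> ('v \<Rightarrow> 'v) \<Rightarrow> complex list \<Rightarrow> 'v \<Rightarrow> 'v" where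
  "polyop sc X [] w = w"
| "polyop sc X (s # ss) w = X (polyop sc X ss w) - sc s (polyop sc X ss w)"

lemma polyop_append: "polyop sc X (ss @ tt) w = polyop sc X ss (polyop sc X tt w)"
  by (induction ss) auto

lemma polyop_linear:
  assumes vs: "vector_space sc" and lX: "Vector_Spaces.linear sc sc X"
  shows "Vector_Spaces.linear sc sc (polyop sc X ss)"
proof (induction ss)
  case Nil
  then show ?case using vs unfolding Vector_Spaces.linear_iff by simp
next
  case (Cons s ss)
  interpret V: vector_space sc by fact
  interpret L: Vector_Spaces.linear sc sc X by fact
  interpret P: Vector_Spaces.linear sc sc "polyop sc X ss" by fact
  show ?case using vs
    by (auto simp add: Vector_Spaces.linear_iff L.add L.scale P.add P.scale V.scale_right_distrib V.scale_right_diff_distrib V.scale_left_commute)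
qed

lemma polyop_X:
  assumes vs: "vector_space sc" and lX: "Vector_Spaces.linear sc sc X"
  shows "polyop sc X tt (X w) = X (polyop sc X tt w)"
proof (induction tt)
  case Nil then show ?case by simp
next
  case (Cons t tt)
  interpret L: Vector_Spaces.linear sc sc X by fact
  show ?case using Cons by (simp add: L.diff L.scale)
qed

lemma polyop_comm:
  assumes vs: "vector_space sc" and lX: "Vector_Spaces.linear sc sc X"
  shows "polyop sc X tt (polyop sc X ss w) = polyop sc X ss (polyop sc X tt w)"
proof (induction ss)
  case Nil then show ?case by simp
next
  case (Cons s ss)
  interpret P: Vector_Spaces.linear sc sc "polyop sc X tt" by (rule polyop_linear[OF vs lX])
  show ?case using Cons by (simp add: P.diff P.scale polyop_X[OF vs lX])
qed

lemma polyop_shift: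
  assumes vs: "vector_space sc" and lX: "Vector_Spaces.linear sc sc X"
    and lR: "Vector_Spaces.linear sc sc R"
    and comm: "\<And>w. X (R w) = R (X w) + sc c (R w)"
  shows "polyop sc X (map (\<lambda>s. s + c) ss) (R w) = R (polyop sc X ss w)"
proof (induction ss)
  case Nil then show ?case by simp
next
  case (Cons s ss)
  interpret V: vector_space sc by fact
  interpret L: Vector_Spaces.linear sc sc R by fact
  show ?case using Cons by (simp add: L.diff L.scale comm V.scale_left_distrib algebra_simps)
qed

lemma polyop_eigen:
  assumes vs: "vector_space sc" and lX: "Vector_Spaces.linear sc sc X"
    and ev: "X v = sc l v"
  shows "polyop sc X ss v = sc (prod_list (map (\<lambda>s. l - s) ss)) v"
proof (induction ss)
  case Nil
  interpret V: vector_space sc by fact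
  show ?case by simp
next
  case (Cons s ss)
  interpret V: vector_space sc by fact
  interpret L: Vector_Spaces.linear sc sc X by fact
  show ?case using Cons by (simp add: L.scale ev V.scale_left_diff_distrib algebra_simps)
qed


lemma polyop_pres:
  assumes vs: "vector_space sc" and S: "module.subspace sc S" and XS: "X ` S \<subseteq> S" and w: "w \<in> S"
  shows "polyop sc X ss w \<in> S"
proof (induction ss)
  case Nil then show ?case using w by simp
next
  case (Cons s ss)
  interpret V: vector_space sc by fact
  show ?case using Cons XS S by (auto intro!: V.subspace_diff V.subspace_scale)
qed

theorem corollary3p3:
  fixes sc :: "complex \<Rightarrow> 'v::ab_group_add \<Rightarrow> 'v"
    and V0 V1 :: "'v set"
    and r0 r1 :: "'n::{finite,linorder} qmat \<Rightarrow> 'v \<Rightarrow> 'v"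
    and lam :: "'n \<Rightarrow> complex"
  assumes "simple_supermodule sc V0 V1 r0 r1"
    and "\<exists>v. highest_weight_vector sc V0 V1 r0 r1 lam v"
    and "\<not> (\<forall>i. lam i \<in> \<int>)"
  shows "\<forall>mu. sch sc V0 V1 r0 mu = 0"
proof -
  note q = assms(1)[unfolded simple_supermodule_def q_supermodule_def]
  have vs: "vector_space sc" using q by (elim conjE) assumption
  interpret V: vector_space sc by fact
  have sub0: "V.subspace V0" using q by (elim conjE) assumption
  have sub1: "V.subspace V1" using q by (elim conjE) assumption
  have int01: "V0 \<inter> V1 = {0}" using q by (elim conjE) assumption
  have decomp: "\<forall>v. \<exists>a\<in>V0. \<exists>b\<in>V1. v = a + b" using q by (elim conjE) assumption
  have lin0: "\<forall>A. Vector_Spaces.linear sc sc (r0 A)" using q by (elim conjE) assumption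
  have lin1: "\<forall>A. Vector_Spaces.linear sc sc (r1 A)" using q by (elim conjE) assumption
  have add0: "\<forall>A B v. r0 (\<lambda>i j. A i j + B i j) v = r0 A v + r0 B v" using q by (elim conjE) assumption
  have sm0: "\<forall>c A v. r0 (\<lambda>i j. c * A i j) v = sc c (r0 A v)" using q by (elim conjE) assumption
  have sm1: "\<forall>c A v. r1 (\<lambda>i j. c * A i j) v = sc c (r1 A v)" using q by (elim conjE) assumption
  have pres: "\<forall>A. r0 A ` V0 \<subseteq> V0 \<and> r0 A ` V1 \<subseteq> V1 \<and> r1 A ` V0 \<subseteq> V1 \<and> r1 A ` V1 \<subseteq> V0" using q by (elim conjE) assumption
  have c00: "\<forall>A B v. r0 (mcomm A B) v = r0 A (r0 B v) - r0 B (r0 A v)" using q by (elim conjE) assumption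
  have c01: "\<forall>A B v. r1 (mcomm A B) v = r0 A (r1 B v) - r1 B (r0 A v)" using q by (elim conjE) assumption
  have anti: "\<forall>A B v. r0 (manti A B) v = r1 A (r1 B v) + r1 B (r1 A v)" using q by (elim conjE) assumption
  have add1: "\<forall>A B v. r1 (\<lambda>i j. A i j + B i j) v = r1 A v + r1 B v" using q by (elim conjE) assumption
  note add1 = add1[rule_format]
  note sm0 = sm0[rule_format] and sm1 = sm1[rule_format] and add0 = add0[rule_format]
    and c00 = c00[rule_format] and c01 = c01[rule_format] and anti = anti[rule_format]
    and lin0 = lin0[rule_format] and lin1 = lin1[rule_format] and decomp = decomp[rule_format]
    and pres = pres[rule_format]
  have gsub: "\<forall>W. graded_submodule sc V0 V1 r0 r1 W \<longrightarrow> W = {0} \<or> W = UNIV" using assms(1) unfolding simple_supermodule_def by (elim conjE) assumption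
  have r0add: "r0 A (x + y) = r0 A x + r0 A y" for A x y
    using lin0[of A] unfolding Vector_Spaces.linear_iff by blast
  have r0sc: "r0 A (sc c x) = sc c (r0 A x)" for A c x
    using lin0[of A] unfolding Vector_Spaces.linear_iff by blast
  have r1add: "r1 A (x + y) = r1 A x + r1 A y" for A x y
    using lin1[of A] unfolding Vector_Spaces.linear_iff by blast
  have r1sc: "r1 A (sc c x) = sc c (r1 A x)" for A c x
    using lin1[of A] unfolding Vector_Spaces.linear_iff by blast
  have r0zero: "\<And>A. r0 A 0 = 0" by (metis V.scale_zero_left r0sc)
  have r1zero: "\<And>A. r1 A 0 = 0" by (metis V.scale_zero_left r1sc)
  have r0z: "\<And>v. r0 (\<lambda>i j. 0) v = 0"
  proof -
    fix v
    have "r0 (\<lambda>i j. 0 * munit undefined undefined i j) v = 0" by (simp only: sm0 V.scale_zero_left)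
    then show "r0 (\<lambda>i j. 0) v = 0" by simp
  qed
  have r0sum: "\<And>F. finite F \<Longrightarrow> r0 (\<lambda>x y. \<Sum>p\<in>F. f p x y) v = (\<Sum>p\<in>F. r0 (f p) v)" for f :: "'n \<times> 'n \<Rightarrow> 'n qmat" and v
  proof -
    fix F :: "('n \<times> 'n) set" assume "finite F"
    then show "r0 (\<lambda>x y. \<Sum>p\<in>F. f p x y) v = (\<Sum>p\<in>F. r0 (f p) v)"
    proof (induction F rule: finite_induct)
      case empty then show ?case using r0z by simp
    next
      case (insert a F)
      then show ?case using add0[of "f a" "\<lambda>x y. \<Sum>p\<in>F. f p x y" v] by simp
    qed
  qed
  have r0decomp: "r0 A w = (\<Sum>p\<in>UNIV. sc (A (fst p) (snd p)) (r0 (munit (fst p) (snd p)) w))" for A w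
  proof -
    have "r0 A w = r0 (\<lambda>x y. \<Sum>p\<in>UNIV. A (fst p) (snd p) * munit (fst p) (snd p) x y) w"
      using mat_decomp[of A] by simp
    also have "\<dots> = (\<Sum>p\<in>UNIV. r0 (\<lambda>x y. A (fst p) (snd p) * munit (fst p) (snd p) x y) w)"
      by (rule r0sum) simp
    also have "\<dots> = (\<Sum>p\<in>UNIV. sc (A (fst p) (snd p)) (r0 (munit (fst p) (snd p)) w))"
      by (simp only: sm0)
    finally show ?thesis .
  qed
  have r1z: "\<And>v. r1 (\<lambda>i j. 0) v = 0"
  proof -
    fix v
    have "r1 (\<lambda>i j. 0 * munit undefined undefined i j) v = 0" by (simp only: sm1 V.scale_zero_left)
    then show "r1 (\<lambda>i j. 0) v = 0" by simp
  qed
  have r1sum: "\<And>F. finite F \<Longrightarrow> r1 (\<lambda>x y. \<Sum>p\<in>F. f p x y) v = (\<Sum>p\<in>F. r1 (f p) v)" for f :: "'n \<times> 'n \<Rightarrow> 'n qmat" and v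
  proof -
    fix F :: "('n \<times> 'n) set" assume "finite F"
    then show "r1 (\<lambda>x y. \<Sum>p\<in>F. f p x y) v = (\<Sum>p\<in>F. r1 (f p) v)"
    proof (induction F rule: finite_induct)
      case empty then show ?case using r1z by simp
    next
      case (insert a F)
      then show ?case using add1[of "f a" "\<lambda>x y. \<Sum>p\<in>F. f p x y" v] by simp
    qed
  qed
  have r1decomp: "r1 A w = (\<Sum>p\<in>UNIV. sc (A (fst p) (snd p)) (r1 (munit (fst p) (snd p)) w))" for A w
  proof -
    have "r1 A w = r1 (\<lambda>x y. \<Sum>p\<in>UNIV. A (fst p) (snd p) * munit (fst p) (snd p) x y) w"
      using mat_decomp[of A] by simp
    also have "\<dots> = (\<Sum>p\<in>UNIV. r1 (\<lambda>x y. A (fst p) (snd p) * munit (fst p) (snd p) x y) w)"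
      by (rule r1sum) simp
    also have "\<dots> = (\<Sum>p\<in>UNIV. sc (A (fst p) (snd p)) (r1 (munit (fst p) (snd p)) w))"
      by (simp only: sm1)
    finally show ?thesis .
  qed
  define cc where "cc i a b = ((if i=a then 1 else 0) - (if i=b then 1 else 0) :: complex)" for i a b :: 'n
  have cc_int: "cc i a b \<in> \<int>" for i a b by (simp add: cc_def)
  have comm0: "r0 (munit i i) (r0 (munit a b) w) = r0 (munit a b) (r0 (munit i i) w) + sc (cc i a b) (r0 (munit a b) w)" for i a b w
  proof -
    have "r0 (mcomm (munit i i) (munit a b)) w = sc (cc i a b) (r0 (munit a b) w)"
      unfolding mcomm_units cc_def by (rule sm0)
    then show ?thesis using c00[of "munit i i" "munit a b" w] by (simp add: diff_eq_eq)
  qed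
  have comm1: "r0 (munit i i) (r1 (munit a b) w) = r1 (munit a b) (r0 (munit i i) w) + sc (cc i a b) (r1 (munit a b) w)" for i a b w
  proof -
    have "r1 (mcomm (munit i i) (munit a b)) w = sc (cc i a b) (r1 (munit a b) w)"
      unfolding mcomm_units cc_def by (rule sm1)
    then show ?thesis using c01[of "munit i i" "munit a b" w] by (simp add: diff_eq_eq)
  qed
  have linX: "Vector_Spaces.linear sc sc (r0 A)" for A by (rule lin0)
  obtain i0 where i0: "lam i0 \<notin> \<int>" using assms(3) by blast
  obtain v where hv: "highest_weight_vector sc V0 V1 r0 r1 lam v" using assms(2) by blast
  have v0: "v \<noteq> 0" and vw: "v \<in> weight_space sc r0 lam" using hv unfolding highest_weight_vector_def by blast+
  define X where "X = r0 (munit i0 i0)"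
  have lX: "Vector_Spaces.linear sc sc X" unfolding X_def by (rule lin0)
  define K where "K = {w. \<exists>ss. set ss \<subseteq> \<int> \<and> polyop sc X ss w = 0}"
  have Ksub: "V.subspace K"
    unfolding V.subspace_def
  proof (intro conjI ballI allI)
    show "0 \<in> K" unfolding K_def by (auto intro: exI[of _ "[]"])
  next
    fix x y assume "x \<in> K" "y \<in> K"
    then obtain ss tt where ss: "set ss \<subseteq> \<int>" "polyop sc X ss x = 0" and tt: "set tt \<subseteq> \<int>" "polyop sc X tt y = 0"
      unfolding K_def by blast
    interpret P: Vector_Spaces.linear sc sc "polyop sc X (tt @ ss)" by (rule polyop_linear[OF vs lX])
    interpret P2: Vector_Spaces.linear sc sc "polyop sc X tt" by (rule polyop_linear[OF vs lX])
    interpret P3: Vector_Spaces.linear sc sc "polyop sc X ss" by (rule polyop_linear[OF vs lX])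
    have "polyop sc X (tt @ ss) (x + y) = 0"
      using polyop_comm[OF vs lX, of tt ss y] by (simp add: polyop_append P3.add ss tt P3.zero)
    then show "x + y \<in> K" unfolding K_def using ss tt by (auto intro!: exI[of _ "tt @ ss"])
  next
    fix c x assume "x \<in> K"
    then obtain ss where ss: "set ss \<subseteq> \<int>" "polyop sc X ss x = 0" unfolding K_def by blast
    interpret P: Vector_Spaces.linear sc sc "polyop sc X ss" by (rule polyop_linear[OF vs lX])
    have "polyop sc X ss (sc c x) = 0" by (simp add: P.scale ss)
    then show "sc c x \<in> K" unfolding K_def using ss by blast
  qed
  have Kunit: "R w \<in> K" if R: "R = r0 (munit a b) \<or> R = r1 (munit a b)" and w: "w \<in> K" for R a b w
  proof -
    obtain ss where ss: "set ss \<subseteq> \<int>" "polyop sc X ss w = 0" using w unfolding K_def by blast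
    have lR: "Vector_Spaces.linear sc sc R" using R lin0 lin1 by blast
    have cm: "X (R u) = R (X u) + sc (cc i0 a b) (R u)" for u using R comm0 comm1 unfolding X_def by blast
    interpret L: Vector_Spaces.linear sc sc R by fact
    have "polyop sc X (map (\<lambda>s. s + cc i0 a b) ss) (R w) = 0"
      by (simp add: polyop_shift[OF vs lX lR cm] ss L.zero)
    moreover have "set (map (\<lambda>s. s + cc i0 a b) ss) \<subseteq> \<int>" using ss cc_int by auto
    ultimately show ?thesis unfolding K_def by blast
  qed
  have Kgr: "graded_submodule sc V0 V1 r0 r1 K"
    unfolding graded_submodule_def
  proof (intro conjI allI ballI)
    show "V.subspace K" by fact
  next
    fix A show "r0 A ` K \<subseteq> K"
    proof
      fix y assume "y \<in> r0 A ` K"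
      then obtain w where w: "w \<in> K" "y = r0 A w" by blast
      show "y \<in> K" unfolding w(2) r0decomp[of A w]
        by (intro V.subspace_sum[OF Ksub] V.subspace_scale[OF Ksub] Kunit[OF _ w(1)]) auto
    qed
  next
    fix A show "r1 A ` K \<subseteq> K"
    proof
      fix y assume "y \<in> r1 A ` K"
      then obtain w where w: "w \<in> K" "y = r1 A w" by blast
      show "y \<in> K" unfolding w(2) r1decomp[of A w]
        by (intro V.subspace_sum[OF Ksub] V.subspace_scale[OF Ksub] Kunit[OF _ w(1)]) auto
    qed
  next
    fix w assume "w \<in> K"
    then obtain ss where ss: "set ss \<subseteq> \<int>" "polyop sc X ss w = 0" unfolding K_def by blast
    obtain a b where ab: "a \<in> V0" "b \<in> V1" "w = a + b" using decomp by blast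
    interpret P: Vector_Spaces.linear sc sc "polyop sc X ss" by (rule polyop_linear[OF vs lX])
    have XV0: "X ` V0 \<subseteq> V0" unfolding X_def using pres[of "munit i0 i0"] by (elim conjE)
    have XV1: "X ` V1 \<subseteq> V1" unfolding X_def using pres[of "munit i0 i0"] by (elim conjE)
    have pa: "polyop sc X ss a \<in> V0" by (rule polyop_pres[OF vs sub0 XV0 ab(1)])
    have pb: "polyop sc X ss b \<in> V1" by (rule polyop_pres[OF vs sub1 XV1 ab(2)])
    have e: "polyop sc X ss a = - polyop sc X ss b" using ss(2) ab(3) by (simp add: P.add eq_neg_iff_add_eq_0)
    have "- polyop sc X ss b \<in> V1" by (rule V.subspace_neg[OF sub1 pb])
    then have "polyop sc X ss a \<in> V0 \<inter> V1" using pa e by simp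
    then have "polyop sc X ss a = 0" using int01 by simp
    moreover then have "polyop sc X ss b = 0" using e by simp
    ultimately have "a \<in> K" "b \<in> K" unfolding K_def using ss by blast+
    then show "\<exists>a\<in>V0 \<inter> K. \<exists>b\<in>V1 \<inter> K. w = a + b" using ab by blast
  qed
  have vnK: "v \<notin> K"
  proof
    assume "v \<in> K"
    then obtain ss where ss: "set ss \<subseteq> \<int>" "polyop sc X ss v = 0" unfolding K_def by blast
    have ev: "X v = sc (lam i0) v" using vw unfolding weight_space_def X_def by blast
    have "prod_list (map (\<lambda>s. lam i0 - s) ss) \<noteq> 0"
    proof
      assume "prod_list (map (\<lambda>s. lam i0 - s) ss) = 0"
      then obtain s where "s \<in> set ss" "lam i0 = s" by (auto simp: prod_list_zero_iff)
      then show False using ss(1) i0 by auto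
    qed
    then show False using ss(2) polyop_eigen[OF vs lX ev, of ss] v0 by simp
  qed
  have K0: "K = {0}" using gsub Kgr vnK by blast
  show ?thesis
  proof
    fix mu :: "'n \<Rightarrow> complex"
    define W where "W = weight_space sc r0 mu"
    have Wsub: "V.subspace W" unfolding W_def weight_space_def V.subspace_def
      by (simp add: r0zero r0add r0sc V.scale_right_distrib V.scale_left_commute)
    show "sch sc V0 V1 r0 mu = 0"
    proof (cases "mu i0 \<in> \<int>")
      case True
      have WK: "W \<subseteq> K"
      proof
        fix w assume "w \<in> W"
        then have "X w = sc (mu i0) w" unfolding W_def weight_space_def X_def by blast
        then have "polyop sc X [mu i0] w = 0" by simp
        then show "w \<in> K" unfolding K_def using True by (auto intro!: exI[of _ "[mu i0]"])
      qed
      have "W \<inter> V0 = {0}" using WK K0 V.subspace_0[OF Wsub] V.subspace_0[OF sub0] by auto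
      moreover have "W \<inter> V1 = {0}" using WK K0 V.subspace_0[OF Wsub] V.subspace_0[OF sub1] by auto
      ultimately show ?thesis unfolding sch_def W_def[symmetric] by simp
    next
      case False
      define m where "m = mu i0"
      have m0: "m \<noteq> 0" using False unfolding m_def by auto
      define T where "T = r1 (munit i0 i0)"
      have lT: "Vector_Spaces.linear sc sc T" unfolding T_def by (rule lin1)
      have TW: "T w \<in> W" if "w \<in> W" for w
      proof -
        have "r0 (munit j j) (T w) = sc (mu j) (T w)" for j
          using comm1[of j i0 i0 w] that unfolding T_def W_def weight_space_def cc_def
          by (simp add: r1sc)
        then show ?thesis unfolding W_def weight_space_def by blast
      qed
      have TT: "T (T w) = sc m w" if "w \<in> W" for w
      proof -
        have "T (T w) + T (T w) = r0 (\<lambda>x y. 2 * munit i0 i0 x y) w"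
          using anti[of "munit i0 i0" "munit i0 i0" w] unfolding manti_units T_def by simp
        also have "\<dots> = sc 2 (sc m w)" using that unfolding sm0 W_def weight_space_def m_def by simp
        finally have "sc 2 (T (T w)) = sc 2 (sc m w)"
          using V.scale_left_distrib[of 1 1 "T (T w)"] by simp
        then have "sc (1/2) (sc 2 (T (T w))) = sc (1/2) (sc 2 (sc m w))" by simp
        then show ?thesis by simp
      qed
      have img: "T ` (W \<inter> V0) = W \<inter> V1"
      proof
        show "T ` (W \<inter> V0) \<subseteq> W \<inter> V1" using TW pres unfolding T_def by blast
      next
        show "W \<inter> V1 \<subseteq> T ` (W \<inter> V0)"
        proof
          fix y assume y: "y \<in> W \<inter> V1"
          define x where "x = sc (1/m) (T y)"
          have "x \<in> W" unfolding x_def using TW y V.subspace_scale[OF Wsub] by blast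
          moreover have "x \<in> V0" unfolding x_def using y pres V.subspace_scale[OF sub0] unfolding T_def by blast
          moreover have "T x = y" unfolding x_def using TT[of y] y m0 lT
            by (simp add: Vector_Spaces.linear_iff)
          ultimately show "y \<in> T ` (W \<inter> V0)" by blast
        qed
      qed
      have inj: "inj_on T (V.span (W \<inter> V0))"
      proof -
        have sp: "V.span (W \<inter> V0) = W \<inter> V0" by (rule V.span_eq_iff[THEN iffD2, OF V.subspace_inter[OF Wsub sub0]])
        have "inj_on T (W \<inter> V0)"
        proof (rule inj_onI)
          fix x y assume x: "x \<in> W \<inter> V0" and y: "y \<in> W \<inter> V0" and e: "T x = T y"
          have "sc m x = sc m y" using TT[of x] TT[of y] x y e by (simp del: V.scale_cancel_left)
          then show "x = y" using m0 by simp
        qed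
        then show ?thesis by (subst sp)
      qed
      have "V.dim (W \<inter> V1) = V.dim (W \<inter> V0)"
        using vector_space_pair_dim_image_eq[OF vs vs lT inj] img by simp
      then show ?thesis unfolding sch_def W_def[symmetric] by simp
    qed
  qed
qed

end
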